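(* Let $\varrho\in C(\mathbb{C};\mathbb{C})$ be real differentiable in $z_0\in\mathbb{C}$ with $(\partial_{\mathrm{wirt}}\varrho(z_0),\overline{\partial}_{\mathrm{wirt}}\varrho(z_0))\neq(0,0)$, let $K\subseteq\mathbb{C}$ be compact and $\varepsilon>0$. (i) If $\partial_{\mathrm{wirt}}\varrho(z_0)\neq0$ and $\overline{\partial}_{\mathrm{wirt}}\varrho(z_0)=0$, there are $\mathbb{C}$-affine maps $\phi,\psi:\mathbb{C}\to\mathbb{C}$ with $\sup_{z\in K}|(\psi\circ\varrho\circ\phi)(z)-z|<\varepsilon$. (ii) If $\partial_{\mathrm{wirt}}\varrho(z_0)=0$ and $\overline{\partial}_{\mathrm{wirt}}\varrho(z_0)\neq0$, there are $\mathbb{C}$-affine maps $\phi,\psi:\mathbb{C}\to\mathbb{C}$ with $\sup_{z\in K}|(\psi\circ\varrho\circ\phi)(z)-\overline{z}|<\varepsilon$. (iii) If $\partial_{\mathrm{wirt}}\varrho(z_0)\neq0\neq\overline{\partial}_{\mathrm{wirt}}\varrho(z_0)$, there are $\mathbb{C}$-affine maps $\phi:\mathbb{C}\to\mathbb{C}^2$ and $\psi:\mathbb{C}^2\to\mathbb{C}^2$ with $\sup_{z\in K}\|(\psi\circ\varrho^{\times2}\circ\phi)(z)-(z,\overline{z})\|_{\mathbb{C}^2}<\varepsilon$.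
   Context: Wirtinger derivatives: $\partial_{\mathrm{wirt}}\varrho=\frac12\left(\frac{\partial\varrho}{\partial x}-\mathrm{i}\frac{\partial\varrho}{\partial y}\right)$, $\overline{\partial}_{\mathrm{wirt}}\varrho=\frac12\left(\frac{\partial\varrho}{\partial x}+\mathrm{i}\frac{\partial\varrho}{\partial y}\right)$. $\varrho$ is real differentiable at $z_0$ if the partial derivatives exist at $z_0$ and $\lim_{h\to0}\frac{\varrho(z_0+h)-\varrho(z_0)-\frac{\partial\varrho}{\partial x}(z_0)\mathrm{Re}(h)-\frac{\partial\varrho}{\partial y}(z_0)\mathrm{Im}(h)}{h}=0$. A map $\mathbb{C}^a\to\mathbb{C}^b$ is $\mathbb{C}$-affine if it has the form $z\mapsto Az+b$ with complex $A,b$. $\varrho^{\times2}(z_1,z_2)=(\varrho(z_1),\varrho(z_2))$. *)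

theory Defs
  imports "HOL-Analysis.Analysis"
begin

definition has_partial_x :: "(complex \<Rightarrow> complex) \<Rightarrow> complex \<Rightarrow> complex \<Rightarrow> bool" where
  "has_partial_x \<rho> z D \<longleftrightarrow> ((\<lambda>t::real. \<rho> (z + complex_of_real t)) has_vector_derivative D) (at 0)"

definition has_partial_y :: "(complex \<Rightarrow> complex) \<Rightarrow> complex \<Rightarrow> complex \<Rightarrow> bool" where
  "has_partial_y \<rho> z D \<longleftrightarrow> ((\<lambda>t::real. \<rho> (z + \<i> * complex_of_real t)) has_vector_derivative D) (at 0)"

definition partial_x :: "(complex \<Rightarrow> complex) \<Rightarrow> complex \<Rightarrow> complex" where
  "partial_x \<rho> z = (THE D. has_partial_x \<rho> z D)"

definition partial_y :: "(complex \<Rightarrow> complex) \<Rightarrow> complex \<Rightarrow> complex" where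
  "partial_y \<rho> z = (THE D. has_partial_y \<rho> z D)"

definition real_differentiable_at :: "(complex \<Rightarrow> complex) \<Rightarrow> complex \<Rightarrow> bool" where
  "real_differentiable_at \<rho> z0 \<longleftrightarrow>
     (\<exists>Dx. has_partial_x \<rho> z0 Dx) \<and> (\<exists>Dy. has_partial_y \<rho> z0 Dy) \<and>
     ((\<lambda>h. (\<rho> (z0 + h) - \<rho> z0 - partial_x \<rho> z0 * complex_of_real (Re h)
              - partial_y \<rho> z0 * complex_of_real (Im h)) / h) \<longlongrightarrow> 0) (at 0)"

definition wirt :: "(complex \<Rightarrow> complex) \<Rightarrow> complex \<Rightarrow> complex" where
  "wirt \<rho> z = (partial_x \<rho> z - \<i> * partial_y \<rho> z) / 2"

definition wirt_bar :: "(complex \<Rightarrow> complex) \<Rightarrow> complex \<Rightarrow> complex" where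
  "wirt_bar \<rho> z = (partial_x \<rho> z + \<i> * partial_y \<rho> z) / 2"

text \<open>C-affine maps; C^2 is modelled as complex \<times> complex (Euclidean product norm).\<close>

definition affine_CC :: "(complex \<Rightarrow> complex) \<Rightarrow> bool" where
  "affine_CC f \<longleftrightarrow> (\<exists>a b. f = (\<lambda>z. a * z + b))"

definition affine_CC2 :: "(complex \<Rightarrow> complex \<times> complex) \<Rightarrow> bool" where
  "affine_CC2 f \<longleftrightarrow> (\<exists>a1 a2 b1 b2. f = (\<lambda>z. (a1 * z + b1, a2 * z + b2)))"

definition affine_C2C2 :: "(complex \<times> complex \<Rightarrow> complex \<times> complex) \<Rightarrow> bool" where
  "affine_C2C2 f \<longleftrightarrow> (\<exists>a11 a12 a21 a22 b1 b2.
      f = (\<lambda>(z1, z2). (a11 * z1 + a12 * z2 + b1, a21 * z1 + a22 * z2 + b2)))"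

definition prod_map2 :: "(complex \<Rightarrow> complex) \<Rightarrow> complex \<times> complex \<Rightarrow> complex \<times> complex" where
  "prod_map2 \<rho> = (\<lambda>(z1, z2). (\<rho> z1, \<rho> z2))"

end

theory Submission
  imports Defs
begin

lemma small_remainder:
  fixes N :: "complex \<Rightarrow> complex" and K :: "complex set" and c :: real
  assumes lim: "((\<lambda>h. N h / h) \<longlongrightarrow> 0) (at 0)"
    and N0: "N 0 = 0" and K: "compact K" and c: "c > 0"
  shows "\<exists>\<delta>>0. \<forall>z\<in>K. norm (N (complex_of_real \<delta> * z)) < c * \<delta>
                    \<and> norm (N (\<i> * complex_of_real \<delta> * z)) < c * \<delta>"
proof -
  obtain M where M: "M > 0" "\<forall>z\<in>K. norm z \<le> M"
    using compact_imp_bounded[OF K] bounded_pos by blast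
  have "c / M > 0" using c M by simp
  then have "\<forall>\<^sub>F h in at 0. dist (N h / h) 0 < c / M"
    using lim \<open>c / M > 0\<close> unfolding tendsto_iff by blast
  then obtain d where d: "d > 0" "\<And>h. h \<noteq> 0 \<Longrightarrow> dist h 0 < d \<Longrightarrow> dist (N h / h) 0 < c / M"
    unfolding eventually_at by blast
  define \<delta> where "\<delta> = d / (2 * M)"
  have dpos: "\<delta> > 0" using d M by (simp add: \<delta>_def)
  have key: "norm (N h) < c * \<delta>" if "norm h \<le> \<delta> * M" for h
  proof (cases "h = 0")
    case True then show ?thesis using N0 c dpos by simp
  next
    case False
    have "\<delta> * M = d / 2" using M by (simp add: \<delta>_def)
    then have "dist h 0 < d" using that d by simp
    then have r: "norm (N h / h) < c / M" using d(2)[OF False] by simp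
    have "norm (N h) = norm (N h / h) * norm h" using False by (simp add: norm_divide)
    also have "\<dots> < (c / M) * norm h" using r False by (intro mult_strict_right_mono) auto
    also have "\<dots> \<le> (c / M) * (\<delta> * M)" using that \<open>c/M>0\<close> by (intro mult_left_mono) auto
    also have "\<dots> = c * \<delta>" using M by simp
    finally show ?thesis .
  qed
  show ?thesis
  proof (intro exI[of _ \<delta>] conjI ballI dpos)
    fix z assume z: "z \<in> K"
    have "norm (complex_of_real \<delta> * z) \<le> \<delta> * M" using M z dpos
      by (simp add: norm_mult mult_left_mono)
    then show "norm (N (complex_of_real \<delta> * z)) < c * \<delta>" by (rule key)
    have "norm (\<i> * complex_of_real \<delta> * z) \<le> \<delta> * M" using M z dpos
      by (simp add: norm_mult mult_left_mono)
    then show "norm (N (\<i> * complex_of_real \<delta> * z)) < c * \<delta>" by (rule key)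
  qed
qed


lemma expand_lin:
  fixes a b h :: complex
  shows "a * complex_of_real (Re h) + b * complex_of_real (Im h)
       = (a - \<i> * b) / 2 * h + (a + \<i> * b) / 2 * cnj h"
proof -
  have g: "a * complex_of_real x + b * complex_of_real y
       = (a - \<i> * b) / 2 * (complex_of_real x + \<i> * complex_of_real y)
         + (a + \<i> * b) / 2 * (complex_of_real x - \<i> * complex_of_real y)" for x y
    by (simp add: field_simps)
  have h: "h = complex_of_real (Re h) + \<i> * complex_of_real (Im h)" by (simp add: complex_eq_iff)
  have c: "cnj h = complex_of_real (Re h) - \<i> * complex_of_real (Im h)" by (simp add: complex_eq_iff)
  show ?thesis using g[of "Re h" "Im h"] h c by metis
qed

lemma case1_alg:
  fixes w R r0 z N :: complex and \<delta> :: real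
  assumes "w \<noteq> 0" "\<delta> \<noteq> 0" "R = r0 + w * (complex_of_real \<delta> * z) + N"
  shows "(1 / (w * complex_of_real \<delta>)) * R + (- r0 / (w * complex_of_real \<delta>)) - z
         = N / (w * complex_of_real \<delta>)"
  using assms by (simp add: field_simps)

lemma case2_alg:
  fixes w R r0 z N :: complex and \<delta> :: real
  assumes "w \<noteq> 0" "\<delta> \<noteq> 0" "R = r0 + w * cnj (complex_of_real \<delta> * z) + N"
  shows "(1 / (w * complex_of_real \<delta>)) * R + (- r0 / (w * complex_of_real \<delta>)) - cnj z
         = N / (w * complex_of_real \<delta>)"
  using assms by (simp add: field_simps)

lemma case3_alg:
  fixes w wb R1 R2 r0 z N1 N2 :: complex and \<delta> :: real
  assumes "w \<noteq> 0" "wb \<noteq> 0" "\<delta> \<noteq> 0"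
    "R1 = r0 + w * (complex_of_real \<delta> * z) + wb * cnj (complex_of_real \<delta> * z) + N1"
    "R2 = r0 + w * (\<i> * complex_of_real \<delta> * z) + wb * cnj (\<i> * complex_of_real \<delta> * z) + N2"
  shows "(1 / (2 * w * complex_of_real \<delta>)) * R1 + (- \<i> / (2 * w * complex_of_real \<delta>)) * R2
           + (- (1 - \<i>) * r0 / (2 * w * complex_of_real \<delta>)) - z
         = (N1 - \<i> * N2) / (2 * w * complex_of_real \<delta>)"
    and "(1 / (2 * wb * complex_of_real \<delta>)) * R1 + (\<i> / (2 * wb * complex_of_real \<delta>)) * R2
           + (- (1 + \<i>) * r0 / (2 * wb * complex_of_real \<delta>)) - cnj z
         = (N1 + \<i> * N2) / (2 * wb * complex_of_real \<delta>)"
  using assms(1-3) unfolding assms(4,5) by (simp_all add: field_simps)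

theorem proposition3p1:
  fixes \<rho> :: "complex \<Rightarrow> complex" and z0 :: complex and K :: "complex set" and \<epsilon> :: real
  assumes cont: "continuous_on UNIV \<rho>"
    and rdiff: "real_differentiable_at \<rho> z0"
    and nz: "(wirt \<rho> z0, wirt_bar \<rho> z0) \<noteq> (0, 0)"
    and K: "compact K"
    and eps: "\<epsilon> > 0"
  shows "(wirt \<rho> z0 \<noteq> 0 \<and> wirt_bar \<rho> z0 = 0 \<longrightarrow>
           (\<exists>\<phi> \<psi>. affine_CC \<phi> \<and> affine_CC \<psi> \<and>
              (\<forall>z\<in>K. norm ((\<psi> \<circ> \<rho> \<circ> \<phi>) z - z) < \<epsilon>)))
       \<and> (wirt \<rho> z0 = 0 \<and> wirt_bar \<rho> z0 \<noteq> 0 \<longrightarrow>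
           (\<exists>\<phi> \<psi>. affine_CC \<phi> \<and> affine_CC \<psi> \<and>
              (\<forall>z\<in>K. norm ((\<psi> \<circ> \<rho> \<circ> \<phi>) z - cnj z) < \<epsilon>)))
       \<and> (wirt \<rho> z0 \<noteq> 0 \<and> wirt_bar \<rho> z0 \<noteq> 0 \<longrightarrow>
           (\<exists>\<phi> \<psi>. affine_CC2 \<phi> \<and> affine_C2C2 \<psi> \<and>
              (\<forall>z\<in>K. norm ((\<psi> \<circ> prod_map2 \<rho> \<circ> \<phi>) z - (z, cnj z)) < \<epsilon>)))"
proof -
  define a where "a = partial_x \<rho> z0"
  define b where "b = partial_y \<rho> z0"
  define w where "w = wirt \<rho> z0"
  define wb where "wb = wirt_bar \<rho> z0"
  define N where "N h = \<rho> (z0 + h) - \<rho> z0 - a * complex_of_real (Re h) - b * complex_of_real (Im h)" for h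
  have lim: "((\<lambda>h. N h / h) \<longlongrightarrow> 0) (at 0)"
    using rdiff unfolding real_differentiable_at_def N_def a_def b_def by blast
  have N0: "N 0 = 0" by (simp add: N_def)
  have exp: "\<rho> (z0 + h) = \<rho> z0 + w * h + wb * cnj h + N h" for h
  proof -
    have "w * h + wb * cnj h = a * complex_of_real (Re h) + b * complex_of_real (Im h)"
      using expand_lin[of a h b] by (simp add: w_def wb_def wirt_def wirt_bar_def a_def b_def)
    then show ?thesis unfolding N_def by (simp add: algebra_simps)
  qed
  have P1: "\<exists>\<phi> \<psi>. affine_CC \<phi> \<and> affine_CC \<psi> \<and> (\<forall>z\<in>K. norm ((\<psi> \<circ> \<rho> \<circ> \<phi>) z - z) < \<epsilon>)"
    if hw: "w \<noteq> 0" and hwb: "wb = 0"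
  proof -
    have c: "\<epsilon> * norm w > 0" using eps hw by simp
    obtain \<delta> where d: "\<delta> > 0" "\<forall>z\<in>K. norm (N (complex_of_real \<delta> * z)) < \<epsilon> * norm w * \<delta>"
      using small_remainder[OF lim N0 K c] by blast
    define \<phi> where "\<phi> = (\<lambda>z. complex_of_real \<delta> * z + z0)"
    define \<psi> where "\<psi> = (\<lambda>u. (1 / (w * complex_of_real \<delta>)) * u + (- \<rho> z0 / (w * complex_of_real \<delta>)))"
    show ?thesis
    proof (rule exI[of _ \<phi>], rule exI[of _ \<psi>], intro conjI ballI)
      show "affine_CC \<phi>" unfolding affine_CC_def \<phi>_def by blast
      show "affine_CC \<psi>" unfolding affine_CC_def \<psi>_def by blast
      fix z assume z: "z \<in> K"
      have R: "\<rho> (\<phi> z) = \<rho> z0 + w * (complex_of_real \<delta> * z) + N (complex_of_real \<delta> * z)"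
        using exp[of "complex_of_real \<delta> * z"] hwb by (simp add: \<phi>_def add.commute)
      have "(\<psi> \<circ> \<rho> \<circ> \<phi>) z - z = N (complex_of_real \<delta> * z) / (w * complex_of_real \<delta>)"
      proof -
        have d0: "\<delta> \<noteq> 0" using d(1) by simp
        have "(\<psi> \<circ> \<rho> \<circ> \<phi>) z = (1 / (w * complex_of_real \<delta>)) * \<rho> (\<phi> z) + (- \<rho> z0 / (w * complex_of_real \<delta>))"
          unfolding \<psi>_def comp_def by (rule refl)
        then show ?thesis using case1_alg[OF hw d0 R] by (simp only:)
      qed
      also have "norm \<dots> = norm (N (complex_of_real \<delta> * z)) / (norm w * \<delta>)"
        using d(1) by (simp add: norm_divide norm_mult)
      also have "\<dots> < (\<epsilon> * norm w * \<delta>) / (norm w * \<delta>)"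
        using d z hw by (intro divide_strict_right_mono) auto
      also have "\<dots> = \<epsilon>" using d(1) hw by simp
      finally show "norm ((\<psi> \<circ> \<rho> \<circ> \<phi>) z - z) < \<epsilon>" .
    qed
  qed
  have P2: "\<exists>\<phi> \<psi>. affine_CC \<phi> \<and> affine_CC \<psi> \<and> (\<forall>z\<in>K. norm ((\<psi> \<circ> \<rho> \<circ> \<phi>) z - cnj z) < \<epsilon>)"
    if hw: "w = 0" and hwb: "wb \<noteq> 0"
  proof -
    have c: "\<epsilon> * norm wb > 0" using eps hwb by simp
    obtain \<delta> where d: "\<delta> > 0" "\<forall>z\<in>K. norm (N (complex_of_real \<delta> * z)) < \<epsilon> * norm wb * \<delta>"
      using small_remainder[OF lim N0 K c] by blast
    define \<phi> where "\<phi> = (\<lambda>z. complex_of_real \<delta> * z + z0)"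
    define \<psi> where "\<psi> = (\<lambda>u. (1 / (wb * complex_of_real \<delta>)) * u + (- \<rho> z0 / (wb * complex_of_real \<delta>)))"
    show ?thesis
    proof (rule exI[of _ \<phi>], rule exI[of _ \<psi>], intro conjI ballI)
      show "affine_CC \<phi>" unfolding affine_CC_def \<phi>_def by blast
      show "affine_CC \<psi>" unfolding affine_CC_def \<psi>_def by blast
      fix z assume z: "z \<in> K"
      have R: "\<rho> (\<phi> z) = \<rho> z0 + wb * cnj (complex_of_real \<delta> * z) + N (complex_of_real \<delta> * z)"
        using exp[of "complex_of_real \<delta> * z"] hw by (simp add: \<phi>_def add.commute)
      have "(\<psi> \<circ> \<rho> \<circ> \<phi>) z - cnj z = N (complex_of_real \<delta> * z) / (wb * complex_of_real \<delta>)"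
      proof -
        have d0: "\<delta> \<noteq> 0" using d(1) by simp
        have "(\<psi> \<circ> \<rho> \<circ> \<phi>) z = (1 / (wb * complex_of_real \<delta>)) * \<rho> (\<phi> z) + (- \<rho> z0 / (wb * complex_of_real \<delta>))"
          unfolding \<psi>_def comp_def by (rule refl)
        then show ?thesis using case2_alg[OF hwb d0 R] by (simp only:)
      qed
      also have "norm \<dots> = norm (N (complex_of_real \<delta> * z)) / (norm wb * \<delta>)"
        using d(1) by (simp add: norm_divide norm_mult)
      also have "\<dots> < (\<epsilon> * norm wb * \<delta>) / (norm wb * \<delta>)"
        using d z hwb by (intro divide_strict_right_mono) auto
      also have "\<dots> = \<epsilon>" using d(1) hwb by simp
      finally show "norm ((\<psi> \<circ> \<rho> \<circ> \<phi>) z - cnj z) < \<epsilon>" .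
    qed
  qed
  have P3: "\<exists>\<phi> \<psi>. affine_CC2 \<phi> \<and> affine_C2C2 \<psi> \<and>
              (\<forall>z\<in>K. norm ((\<psi> \<circ> prod_map2 \<rho> \<circ> \<phi>) z - (z, cnj z)) < \<epsilon>)"
    if hw: "w \<noteq> 0" and hwb: "wb \<noteq> 0"
  proof -
    define m where "m = min (norm w) (norm wb)"
    have mpos: "m > 0" using hw hwb by (simp add: m_def)
    have c: "\<epsilon> / 2 * m / 2 > 0" using eps mpos by simp
    obtain \<delta> where d: "\<delta> > 0" "\<forall>z\<in>K. norm (N (complex_of_real \<delta> * z)) < \<epsilon> / 2 * m / 2 * \<delta>
                    \<and> norm (N (\<i> * complex_of_real \<delta> * z)) < \<epsilon> / 2 * m / 2 * \<delta>"
      using small_remainder[OF lim N0 K c] by blast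
    define \<phi> where "\<phi> = (\<lambda>z. (complex_of_real \<delta> * z + z0, (\<i> * complex_of_real \<delta>) * z + z0))"
    define \<psi> where "\<psi> = (\<lambda>(u1, u2). ((1 / (2 * w * complex_of_real \<delta>)) * u1 + (- \<i> / (2 * w * complex_of_real \<delta>)) * u2
           + (- (1 - \<i>) * \<rho> z0 / (2 * w * complex_of_real \<delta>)),
           (1 / (2 * wb * complex_of_real \<delta>)) * u1 + (\<i> / (2 * wb * complex_of_real \<delta>)) * u2
           + (- (1 + \<i>) * \<rho> z0 / (2 * wb * complex_of_real \<delta>))))"
    have comp: "norm ((N1 + c * N2) / (2 * v * complex_of_real \<delta>)) < \<epsilon> / 2"
      if "norm c = 1" "v \<noteq> 0" "m \<le> norm v" "norm N1 < \<epsilon> / 2 * m / 2 * \<delta>" "norm N2 < \<epsilon> / 2 * m / 2 * \<delta>"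
      for N1 N2 c v
    proof -
      have "norm (N1 + c * N2) \<le> norm N1 + norm N2"
        using norm_triangle_ineq[of N1 "c * N2"] that(1) by (simp add: norm_mult)
      also have "\<dots> < \<epsilon> / 2 * m * \<delta>" using that by simp
      also have "\<dots> \<le> \<epsilon> / 2 * norm v * \<delta>" using that eps d(1) by (intro mult_right_mono mult_left_mono) auto
      finally have lt: "norm (N1 + c * N2) < \<epsilon> / 2 * norm v * \<delta>" .
      have "norm ((N1 + c * N2) / (2 * v * complex_of_real \<delta>)) = norm (N1 + c * N2) / (2 * norm v * \<delta>)"
        using d(1) by (simp add: norm_divide norm_mult)
      also have "\<dots> < (\<epsilon> / 2 * norm v * \<delta>) / (2 * norm v * \<delta>)"
        using lt d(1) that(2) by (intro divide_strict_right_mono) auto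
      also have "\<dots> = \<epsilon> / 4" using d(1) that(2) by simp
      finally show ?thesis using eps by simp
    qed
    show ?thesis
    proof (rule exI[of _ \<phi>], rule exI[of _ \<psi>], intro conjI ballI)
      show "affine_CC2 \<phi>" unfolding affine_CC2_def \<phi>_def by blast
      show "affine_C2C2 \<psi>" unfolding affine_C2C2_def \<psi>_def by blast
      fix z assume z: "z \<in> K"
      have R1: "\<rho> (complex_of_real \<delta> * z + z0) = \<rho> z0 + w * (complex_of_real \<delta> * z) + wb * cnj (complex_of_real \<delta> * z) + N (complex_of_real \<delta> * z)"
        using exp[of "complex_of_real \<delta> * z"] by (simp add: add.commute)
      have R2: "\<rho> (\<i> * complex_of_real \<delta> * z + z0) = \<rho> z0 + w * (\<i> * complex_of_real \<delta> * z) + wb * cnj (\<i> * complex_of_real \<delta> * z) + N (\<i> * complex_of_real \<delta> * z)"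
        using exp[of "\<i> * complex_of_real \<delta> * z"] by (simp add: add.commute)
      have d0: "\<delta> \<noteq> 0" using d(1) by simp
      have e: "(\<psi> \<circ> prod_map2 \<rho> \<circ> \<phi>) z - (z, cnj z) =
            ((N (complex_of_real \<delta> * z) - \<i> * N (\<i> * complex_of_real \<delta> * z)) / (2 * w * complex_of_real \<delta>),
             (N (complex_of_real \<delta> * z) + \<i> * N (\<i> * complex_of_real \<delta> * z)) / (2 * wb * complex_of_real \<delta>))"
      proof -
        have pm: "(\<psi> \<circ> prod_map2 \<rho> \<circ> \<phi>) z = \<psi> (\<rho> (complex_of_real \<delta> * z + z0), \<rho> (\<i> * complex_of_real \<delta> * z + z0))"
          unfolding comp_def prod_map2_def \<phi>_def by simp
        show ?thesis unfolding pm unfolding \<psi>_def prod.case minus_prod_def fst_conv snd_conv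
          using case3_alg[OF hw hwb d0 R1 R2] by (simp only:)
      qed
      have n1': "norm ((N (complex_of_real \<delta> * z) + (- \<i>) * N (\<i> * complex_of_real \<delta> * z)) / (2 * w * complex_of_real \<delta>)) < \<epsilon> / 2"
        using d(2) z hw by (intro comp) (simp_all add: m_def)
      have n1: "norm ((N (complex_of_real \<delta> * z) - \<i> * N (\<i> * complex_of_real \<delta> * z)) / (2 * w * complex_of_real \<delta>)) < \<epsilon> / 2"
        using n1' by simp
      have n2: "norm ((N (complex_of_real \<delta> * z) + \<i> * N (\<i> * complex_of_real \<delta> * z)) / (2 * wb * complex_of_real \<delta>)) < \<epsilon> / 2"
        using d(2) z hwb by (intro comp) (simp_all add: m_def)
      show "norm ((\<psi> \<circ> prod_map2 \<rho> \<circ> \<phi>) z - (z, cnj z)) < \<epsilon>"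
        unfolding e using norm_Pair_le[of "(N (complex_of_real \<delta> * z) - \<i> * N (\<i> * complex_of_real \<delta> * z)) / (2 * w * complex_of_real \<delta>)" "(N (complex_of_real \<delta> * z) + \<i> * N (\<i> * complex_of_real \<delta> * z)) / (2 * wb * complex_of_real \<delta>)"] n1 n2 by linarith
    qed
  qed
  show ?thesis using P1 P2 P3 unfolding w_def wb_def by blast
qed

end
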